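(* For every $M$ with $\frac12\le M<\frac34$, every deterministic semi-online algorithm with migration factor $M$ for scheduling on two hierarchical machines with known optimal makespan (bin stretching) has competitive ratio at least $2-M$.
   Context: Model (two hierarchical machines with migration, bin stretching). Jobs $1,2,\dots,n$ arrive one by one ($n$ unknown in advance). Job $j$ has a size $p_j>0$ and a grade of service (GoS) $g_j\in\{1,2\}$; a job of GoS $1$ may only be processed on machine $m_1$, a job of GoS $2$ may be processed on $m_1$ or on $m_2$. The load of a machine is the total size of its jobs, the makespan is the maximum load. When job $j$ arrives, the algorithm must assign it, and may migrate previously arrived jobs (respecting GoS) of total size at most $M\cdot p_j$ (migration factor $M$). Bin stretching: the optimal offline makespan of the complete input is known in advance to the algorithm (scaled to $1$). The competitive ratio is the supremum over inputs of (algorithm's makespan)/(optimal makespan). *)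

theory Defs
  imports Complex_Main
begin

text \<open>An input is a list of jobs;
  jobs are indexed 0 .. length - 1.  A schedule is a function nat => bool,
  where True means "assigned to machine m2" and False "assigned to m1";
  only its values on indices below the input length matter.\<close>

type_synonym job = "real \<times> nat"
type_synonym schedule = "nat \<Rightarrow> bool"

definition size_of :: "job \<Rightarrow> real" where "size_of j = fst j"
definition gos :: "job \<Rightarrow> nat" where "gos j = snd j"

definition valid_input :: "job list \<Rightarrow> bool" where
  "valid_input \<sigma> \<longleftrightarrow> (\<forall>j \<in> set \<sigma>. size_of j > 0 \<and> gos j \<in> {1, 2})"

definition feasible :: "job list \<Rightarrow> schedule \<Rightarrow> bool" where
  "feasible \<sigma> s \<longleftrightarrow> (\<forall>i < length \<sigma>. s i \<longrightarrow> gos (\<sigma> ! i) = 2)"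

definition load1 :: "job list \<Rightarrow> schedule \<Rightarrow> real" where
  "load1 \<sigma> s = (\<Sum>i \<in> {i. i < length \<sigma> \<and> \<not> s i}. size_of (\<sigma> ! i))"

definition load2 :: "job list \<Rightarrow> schedule \<Rightarrow> real" where
  "load2 \<sigma> s = (\<Sum>i \<in> {i. i < length \<sigma> \<and> s i}. size_of (\<sigma> ! i))"

definition makespan :: "job list \<Rightarrow> schedule \<Rightarrow> real" where
  "makespan \<sigma> s = max (load1 \<sigma> s) (load2 \<sigma> s)"

text \<open>Optimal offline makespan (the set is finite and nonempty).\<close>
definition opt :: "job list \<Rightarrow> real" where
  "opt \<sigma> = Min {makespan \<sigma> s | s. feasible \<sigma> s}"

definition migrated :: "job list \<Rightarrow> schedule \<Rightarrow> schedule \<Rightarrow> real" where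
  "migrated xs s_old s_new =
     (\<Sum>i \<in> {i. i < length xs \<and> s_old i \<noteq> s_new i}. size_of (xs ! i))"

text \<open>A deterministic semi-online algorithm for bin stretching is a function
  A T xs giving the schedule maintained after the jobs xs have arrived, when the
  optimal makespan T of the complete input is known in advance.\<close>
definition semi_online_alg :: "real \<Rightarrow> (real \<Rightarrow> job list \<Rightarrow> schedule) \<Rightarrow> bool" where
  "semi_online_alg M A \<longleftrightarrow>
     (\<forall>T xs x. valid_input (xs @ [x]) \<longrightarrow>
        feasible (xs @ [x]) (A T (xs @ [x])) \<and>
        migrated xs (A T xs) (A T (xs @ [x])) \<le> M * size_of x)"

end

theory Submission
  imports Defs
begin

lemma sum3:
  "(\<Sum>i\<in>{i. i < 3 \<and> P i}. f i) =
     (if P 0 then f 0 else 0) + (if P 1 then f 1 else 0) + (if P 2 then f (2::nat) else (0::real))"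
proof -
  have "{i. i < 3 \<and> P i} = {i\<in>{0,1,2::nat}. P i}" by auto
  then have "(\<Sum>i\<in>{i. i < 3 \<and> P i}. f i) = (\<Sum>i\<in>{0,1,2::nat}. if P i then f i else 0)"
    by (simp only: sum.inter_filter finite.intros)
  also have "\<dots> = (if P 0 then f 0 else 0) + (if P 1 then f 1 else 0) + (if P 2 then f (2::nat) else (0::real))"
    by (simp add: add.assoc)
  finally show ?thesis .
qed

lemma fin_ms: "finite {makespan \<sigma> s | s. feasible \<sigma> s}"
proof (rule finite_subset)
  show "{makespan \<sigma> s | s. feasible \<sigma> s} \<subseteq> (\<lambda>B. makespan \<sigma> (\<lambda>i. i \<in> B)) ` Pow {..<length \<sigma>}"
  proof
    fix y assume "y \<in> {makespan \<sigma> s | s. feasible \<sigma> s}"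
    then obtain s where y: "y = makespan \<sigma> s" by auto
    let ?B = "{i. i < length \<sigma> \<and> s i}"
    have "makespan \<sigma> s = makespan \<sigma> (\<lambda>i. i \<in> ?B)"
    proof -
      have "{i. i < length \<sigma> \<and> \<not> (i \<in> ?B)} = {i. i < length \<sigma> \<and> \<not> s i}" by auto
      then have 1: "load1 \<sigma> s = load1 \<sigma> (\<lambda>i. i \<in> ?B)" unfolding load1_def by simp
      have "{i. i < length \<sigma> \<and> (i \<in> ?B)} = {i. i < length \<sigma> \<and> s i}" by auto
      then have 2: "load2 \<sigma> s = load2 \<sigma> (\<lambda>i. i \<in> ?B)" unfolding load2_def by simp
      show ?thesis unfolding makespan_def 1 2 ..
    qed
    moreover have "?B \<in> Pow {..<length \<sigma>}" by auto
    ultimately show "y \<in> (\<lambda>B. makespan \<sigma> (\<lambda>i. i \<in> B)) ` Pow {..<length \<sigma>}" using y by blast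
  qed
  show "finite ((\<lambda>B. makespan \<sigma> (\<lambda>i. i \<in> B)) ` Pow {..<length \<sigma>})" by simp
qed

lemma opt_eq:
  assumes "feasible \<sigma> s0" "makespan \<sigma> s0 = v" "\<And>s. feasible \<sigma> s \<Longrightarrow> v \<le> makespan \<sigma> s"
  shows "opt \<sigma> = v"
  unfolding opt_def
  by (rule Min_eqI[OF fin_ms]) (use assms in auto)

lemma mig_ge:
  assumes "i < length xs" "s_old i \<noteq> s_new i" "\<forall>j \<in> set xs. size_of j > 0"
  shows "size_of (xs ! i) \<le> migrated xs s_old s_new"
  unfolding migrated_def
proof (rule member_le_sum)
  show "i \<in> {i. i < length xs \<and> s_old i \<noteq> s_new i}" using assms by auto
  show "finite {i. i < length xs \<and> s_old i \<noteq> s_new i}" by simp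
  fix x assume "x \<in> {i. i < length xs \<and> s_old i \<noteq> s_new i} - {i}"
  then show "0 \<le> size_of (xs ! x)" using assms(3) by (auto intro: less_imp_le)
qed

theorem mainTheorem15:
  fixes M c :: real and A :: "real \<Rightarrow> job list \<Rightarrow> schedule"
  assumes "1/2 \<le> M" and "M < 3/4"
    and "semi_online_alg M A"
    and "c < 2 - M"
  shows "\<exists>\<sigma>. \<sigma> \<noteq> [] \<and> valid_input \<sigma> \<and> makespan \<sigma> (A (opt \<sigma>) \<sigma>) > c * opt \<sigma>"
proof -
  define d where "d = min ((2 - M - c)/2) (1/8)"
  have d0: "d > 0" and d1: "d \<le> 1/8" and d2: "c < 2 - M - d"
    using assms by (auto simp: d_def min_def field_simps)
  define g :: job where "g = (1 - M - d, 1)"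
  define a :: job where "a = (M + d, 2)"
  define p :: job where "p = (M + d, 1)"
  define b :: job where "b = (1, 2)"
  define \<sigma>1 where "\<sigma>1 = [g, a, p]"
  define \<sigma>2 where "\<sigma>2 = [g, a, b]"
  have v1: "valid_input \<sigma>1" using assms d0 d1
    by (auto simp: valid_input_def \<sigma>1_def g_def a_def p_def size_of_def gos_def)
  have v2: "valid_input \<sigma>2" using assms d0 d1
    by (auto simp: valid_input_def \<sigma>2_def g_def a_def b_def size_of_def gos_def)
  have length3: "length [x,y,z] = 3" for x y z :: job by simp
  have L1: "load1 \<sigma>1 s = (if s 0 then 0 else 1 - M - d) + (if s 1 then 0 else M + d) + (if s 2 then 0 else M + d)" for s
    unfolding load1_def \<sigma>1_def by (simp only: length3 sum3) (simp add: g_def a_def p_def size_of_def)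
  have L2: "load2 \<sigma>1 s = (if s 0 then 1 - M - d else 0) + (if s 1 then M + d else 0) + (if s 2 then M + d else 0)" for s
    unfolding load2_def \<sigma>1_def by (simp only: length3 sum3) (simp add: g_def a_def p_def size_of_def)
  have L1': "load1 \<sigma>2 s = (if s 0 then 0 else 1 - M - d) + (if s 1 then 0 else M + d) + (if s 2 then 0 else 1)" for s
    unfolding load1_def \<sigma>2_def by (simp only: length3 sum3) (simp add: g_def a_def b_def size_of_def)
  have L2': "load2 \<sigma>2 s = (if s 0 then 1 - M - d else 0) + (if s 1 then M + d else 0) + (if s 2 then 1 else 0)" for s
    unfolding load2_def \<sigma>2_def by (simp only: length3 sum3) (simp add: g_def a_def b_def size_of_def)
  have F1: "feasible \<sigma>1 s \<longleftrightarrow> \<not> s 0 \<and> \<not> s 2" for s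
    unfolding feasible_def \<sigma>1_def
    by (auto simp: g_def a_def p_def gos_def less_Suc_eq numeral_3_eq_3 numeral_2_eq_2)
  have F2: "feasible \<sigma>2 s \<longleftrightarrow> \<not> s 0" for s
    unfolding feasible_def \<sigma>2_def
    by (auto simp: g_def a_def b_def gos_def less_Suc_eq numeral_3_eq_3 numeral_2_eq_2)
  have o1: "opt \<sigma>1 = 1"
  proof (rule opt_eq[of _ "\<lambda>i. i = 1"])
    show "feasible \<sigma>1 (\<lambda>i. i = 1)" by (simp add: F1)
    show "makespan \<sigma>1 (\<lambda>i. i = 1) = 1" using d0 d1 assms
      by (simp add: makespan_def L1 L2)
    fix s assume "feasible \<sigma>1 s"
    then show "1 \<le> makespan \<sigma>1 s" using d0 d1 assms
      by (auto simp: F1 makespan_def L1 L2)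
  qed
  have o2: "opt \<sigma>2 = 1"
  proof (rule opt_eq[of _ "\<lambda>i. i = 2"])
    show "feasible \<sigma>2 (\<lambda>i. i = 2)" by (simp add: F2)
    show "makespan \<sigma>2 (\<lambda>i. i = 2) = 1" using d0 d1 assms
      by (simp add: makespan_def L1' L2')
    fix s assume "feasible \<sigma>2 s"
    then show "1 \<le> makespan \<sigma>2 s" using d0 d1 assms
      by (auto simp: F2 makespan_def L1' L2')
  qed
  let ?s = "A 1 [g, a]"
  have pos: "\<forall>j \<in> set [g, a]. size_of j > 0" using assms d0 d1
    by (auto simp: g_def a_def size_of_def)
  have sz: "size_of ([g, a] ! 1) = M + d" by (simp add: a_def size_of_def)
  show ?thesis
  proof (cases "?s 1")
    case False
    have "feasible \<sigma>1 (A 1 \<sigma>1) \<and> migrated [g, a] ?s (A 1 \<sigma>1) \<le> M * size_of p"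
      using assms(3) v1 unfolding semi_online_alg_def \<sigma>1_def by (metis append_Cons append_Nil)
    moreover have "M * size_of p < M + d" using assms d0
      by (simp add: p_def size_of_def)
    ultimately have "\<not> A 1 \<sigma>1 1" using mig_ge[OF _ _ pos, of 1 ?s "A 1 \<sigma>1"] sz False
      by fastforce
    moreover have "feasible \<sigma>1 (A 1 \<sigma>1)" using calculation
      using assms(3) v1 unfolding semi_online_alg_def \<sigma>1_def by (metis append_Cons append_Nil)
    ultimately have "load1 \<sigma>1 (A 1 \<sigma>1) = 1 + M + d" by (simp add: F1 L1)
    then have "makespan \<sigma>1 (A 1 \<sigma>1) > c" using assms d0 unfolding makespan_def by linarith
    then show ?thesis using v1 o1 by (intro exI[of _ \<sigma>1]) (simp add: \<sigma>1_def)
  next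
    case True
    have fm: "feasible \<sigma>2 (A 1 \<sigma>2) \<and> migrated [g, a] ?s (A 1 \<sigma>2) \<le> M * size_of b"
      using assms(3) v2 unfolding semi_online_alg_def \<sigma>2_def by (metis append_Cons append_Nil)
    moreover have "M * size_of b < M + d" using assms d0
      by (simp add: b_def size_of_def)
    ultimately have "A 1 \<sigma>2 1" using mig_ge[OF _ _ pos, of 1 ?s "A 1 \<sigma>2"] sz True
      by fastforce
    then have "makespan \<sigma>2 (A 1 \<sigma>2) > c" using fm assms d0 d2
      unfolding makespan_def by (cases "A 1 \<sigma>2 2") (auto simp: F2 L1' L2')
    then show ?thesis using v2 o2 by (intro exI[of _ \<sigma>2]) (simp add: \<sigma>2_def)
  qed
qed

end
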